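(* Let $G$ be a non-abelian finite $p$-group such that $Z(G)$ has rank $r$. Suppose $\rho_1,\dots,\rho_k$ are irreducible ordinary representations of $G$ such that $\bigoplus_{i=1}^k\rho_i$ is a faithful projective representation of $G$. (i) If $Z(G)\not\cong(\mathbb{Z}/2\mathbb{Z})^2$ and $Z(G)\not\cong(\mathbb{Z}/2\mathbb{Z})^4$, then $k>r$. (ii) If $Z(G)\cong(\mathbb{Z}/2\mathbb{Z})^2$ or $(\mathbb{Z}/2\mathbb{Z})^4$, then $k>r-1$.
   Context: Rank means minimal number of generators. An ordinary representation $\rho$ of $G$ is faithful as a projective representation if the only $g\in G$ with $\rho(g)$ a scalar matrix is $g=1$. *)

theory Defs
  imports "HOL-Algebra.Algebra" "Jordan_Normal_Form.Matrix"
begin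

definition center :: "('g, 'b) monoid_scheme \<Rightarrow> 'g set" where
  "center G = {z \<in> carrier G. \<forall>g \<in> carrier G. z \<otimes>\<^bsub>G\<^esub> g = g \<otimes>\<^bsub>G\<^esub> z}"

definition subgroup_rank :: "('g, 'b) monoid_scheme \<Rightarrow> 'g set \<Rightarrow> nat" where
  "subgroup_rank G H = (LEAST n. \<exists>S. S \<subseteq> H \<and> finite S \<and> card S = n \<and> generate G S = H)"

definition p_group :: "('g, 'b) monoid_scheme \<Rightarrow> nat \<Rightarrow> bool" where
  "p_group G p \<longleftrightarrow> group G \<and> Factorial_Ring.prime p \<and> finite (carrier G) \<and> (\<exists>m. card (carrier G) = p ^ m)"

definition is_rep :: "('g, 'b) monoid_scheme \<Rightarrow> nat \<Rightarrow> ('g \<Rightarrow> complex mat) \<Rightarrow> bool" where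
  "is_rep G n \<rho> \<longleftrightarrow> \<rho> \<one>\<^bsub>G\<^esub> = 1\<^sub>m n \<and> (\<forall>g \<in> carrier G. \<rho> g \<in> carrier_mat n n) \<and>
     (\<forall>g \<in> carrier G. \<forall>h \<in> carrier G. \<rho> (g \<otimes>\<^bsub>G\<^esub> h) = \<rho> g * \<rho> h)"

definition rep_deg :: "('g, 'b) monoid_scheme \<Rightarrow> ('g \<Rightarrow> complex mat) \<Rightarrow> nat" where
  "rep_deg G \<rho> = dim_row (\<rho> \<one>\<^bsub>G\<^esub>)"

definition is_subspace :: "nat \<Rightarrow> complex vec set \<Rightarrow> bool" where
  "is_subspace n W \<longleftrightarrow> W \<subseteq> carrier_vec n \<and> 0\<^sub>v n \<in> W \<and>
     (\<forall>v \<in> W. \<forall>w \<in> W. v + w \<in> W) \<and> (\<forall>c. \<forall>v \<in> W. c \<cdot>\<^sub>v v \<in> W)"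

definition irreducible_rep :: "('g, 'b) monoid_scheme \<Rightarrow> ('g \<Rightarrow> complex mat) \<Rightarrow> bool" where
  "irreducible_rep G \<rho> \<longleftrightarrow> (let n = rep_deg G \<rho> in
     is_rep G n \<rho> \<and> n > 0 \<and>
     (\<forall>W. is_subspace n W \<and> (\<forall>g \<in> carrier G. \<forall>w \<in> W. \<rho> g *\<^sub>v w \<in> W)
          \<longrightarrow> W = {0\<^sub>v n} \<or> W = carrier_vec n))"

definition direct_sum_rep :: "('g \<Rightarrow> complex mat) list \<Rightarrow> 'g \<Rightarrow> complex mat" where
  "direct_sum_rep \<rho>s g = diag_block_mat (map (\<lambda>\<rho>. \<rho> g) \<rho>s)"

definition is_scalar_mat :: "complex mat \<Rightarrow> bool" where
  "is_scalar_mat M \<longleftrightarrow> (\<exists>c. M = c \<cdot>\<^sub>m 1\<^sub>m (dim_row M))"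

definition proj_faithful :: "('g, 'b) monoid_scheme \<Rightarrow> ('g \<Rightarrow> complex mat) \<Rightarrow> bool" where
  "proj_faithful G \<rho> \<longleftrightarrow> (\<forall>g \<in> carrier G. is_scalar_mat (\<rho> g) \<longrightarrow> g = \<one>\<^bsub>G\<^esub>)"

abbreviation Z2 :: "int monoid" where "Z2 \<equiv> integer_mod_group 2"

end

theory Submission
  imports Defs "Jordan_Normal_Form.Spectral_Radius"
begin

lemma schur_central:
  assumes irr: "irreducible_rep G \<rho>" and z: "z \<in> carrier G"
    and zc: "\<forall>g\<in>carrier G. z \<otimes>\<^bsub>G\<^esub> g = g \<otimes>\<^bsub>G\<^esub> z"
  shows "\<rho> z = (\<rho> z $$ (0,0)) \<cdot>\<^sub>m 1\<^sub>m (rep_deg G \<rho>)"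
proof -
  define n where "n = rep_deg G \<rho>"
  have rep: "is_rep G n \<rho>" and n: "n > 0" and irrW: "\<And>W. is_subspace n W \<Longrightarrow> (\<forall>g\<in>carrier G. \<forall>w\<in>W. \<rho> g *\<^sub>v w \<in> W) \<Longrightarrow> W = {0\<^sub>v n} \<or> W = carrier_vec n"
    using irr unfolding irreducible_rep_def n_def Let_def by auto
  have car: "\<And>g. g \<in> carrier G \<Longrightarrow> \<rho> g \<in> carrier_mat n n" using rep unfolding is_rep_def by auto
  have hom: "\<And>g h. g \<in> carrier G \<Longrightarrow> h \<in> carrier G \<Longrightarrow> \<rho> (g \<otimes>\<^bsub>G\<^esub> h) = \<rho> g * \<rho> h" using rep unfolding is_rep_def by auto
  have A: "\<rho> z \<in> carrier_mat n n" using car z by auto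
  obtain c where "eigenvalue (\<rho> z) c" using spectrum_non_empty[OF A n] unfolding spectrum_def by auto
  then obtain v where v: "v \<in> carrier_vec n" "v \<noteq> 0\<^sub>v n" "\<rho> z *\<^sub>v v = c \<cdot>\<^sub>v v"
    unfolding eigenvalue_def eigenvector_def using A by auto
  define W where "W = {w \<in> carrier_vec n. \<rho> z *\<^sub>v w = c \<cdot>\<^sub>v w}"
  have sub: "is_subspace n W"
  proof -
    have 1: "W \<subseteq> carrier_vec n" "0\<^sub>v n \<in> W" unfolding W_def using A by auto
    have 2: "\<forall>x\<in>W. \<forall>y\<in>W. x + y \<in> W" unfolding W_def
      using A by (auto simp: mult_add_distrib_mat_vec[OF A] smult_add_distrib_vec)
    have 3: "\<forall>d. \<forall>x\<in>W. d \<cdot>\<^sub>v x \<in> W" unfolding W_def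
      using A by (auto simp: mult_mat_vec[OF A] smult_smult_assoc mult.commute)
    show ?thesis using 1 2 3 unfolding is_subspace_def by blast
  qed
  have inv: "\<forall>g\<in>carrier G. \<forall>w\<in>W. \<rho> g *\<^sub>v w \<in> W"
  proof (intro ballI)
    fix g w assume g: "g \<in> carrier G" and w: "w \<in> W"
    have wc: "w \<in> carrier_vec n" and ww: "\<rho> z *\<^sub>v w = c \<cdot>\<^sub>v w" using w W_def by auto
    have "\<rho> z *\<^sub>v (\<rho> g *\<^sub>v w) = (\<rho> z * \<rho> g) *\<^sub>v w" using A car[OF g] wc by simp
    also have "\<dots> = \<rho> (z \<otimes>\<^bsub>G\<^esub> g) *\<^sub>v w" using hom z g by simp
    also have "\<dots> = \<rho> (g \<otimes>\<^bsub>G\<^esub> z) *\<^sub>v w" using zc g by simp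
    also have "\<dots> = (\<rho> g * \<rho> z) *\<^sub>v w" using hom z g by simp
    also have "\<dots> = \<rho> g *\<^sub>v (c \<cdot>\<^sub>v w)" using A car[OF g] wc ww by simp
    also have "\<dots> = c \<cdot>\<^sub>v (\<rho> g *\<^sub>v w)" using mult_mat_vec[OF car[OF g] wc] by simp
    finally show "\<rho> g *\<^sub>v w \<in> W" unfolding W_def using car[OF g] wc by auto
  qed
  have "v \<in> W" using v W_def by auto
  hence WW: "W = carrier_vec n" using irrW[OF sub inv] v by auto
  have eq: "\<rho> z = c \<cdot>\<^sub>m 1\<^sub>m n"
  proof (rule eq_matI)
    fix i j assume i: "i < dim_row (c \<cdot>\<^sub>m 1\<^sub>m n)" and j: "j < dim_col (c \<cdot>\<^sub>m 1\<^sub>m n)"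
    have "unit_vec n j \<in> W" using WW j by auto
    hence "\<rho> z *\<^sub>v unit_vec n j = c \<cdot>\<^sub>v unit_vec n j" unfolding W_def by auto
    hence "(\<rho> z *\<^sub>v unit_vec n j) $ i = (c \<cdot>\<^sub>v unit_vec n j) $ i" by simp
    thus "\<rho> z $$ (i, j) = (c \<cdot>\<^sub>m 1\<^sub>m n) $$ (i, j)" using i j A by auto
  qed (use A in auto)
  have "\<rho> z $$ (0,0) = c" using eq n by simp
  thus ?thesis using eq n_def by simp
qed

lemma diag_block_scalar:
  fixes c :: complex
  assumes "\<forall>A \<in> set As. \<exists>m. A = c \<cdot>\<^sub>m 1\<^sub>m m"
  shows "diag_block_mat As = c \<cdot>\<^sub>m 1\<^sub>m (dim_row (diag_block_mat As))"
  using assms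
proof (induction As)
  case Nil
  then show ?case by (auto intro!: eq_matI)
next
  case (Cons A As)
  obtain m where A: "A = c \<cdot>\<^sub>m 1\<^sub>m m" using Cons.prems by auto
  define B where "B = diag_block_mat As"
  have B: "B = c \<cdot>\<^sub>m 1\<^sub>m (dim_row B)" using Cons B_def by auto
  have dB: "dim_col B = dim_row B" using B by (metis dim_col_mat(1) index_smult_mat(3) index_one_mat(3))
  have Be: "\<And>i j. i < dim_row B \<Longrightarrow> j < dim_row B \<Longrightarrow> B $$ (i,j) = (if i = j then c else 0)"
    by (subst B, simp)
  show ?case unfolding diag_block_mat.simps Let_def B_def[symmetric]
    apply (rule eq_matI)
    apply (auto simp: A dB Be)
    done
qed

lemma subgroup_pow_closed:
  assumes "group G" "subgroup H G" "x \<in> H"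
  shows "x [^]\<^bsub>G\<^esub> (j::nat) \<in> H"
proof (induction j)
  case 0 then show ?case using assms by (simp add: subgroup.one_closed)
next
  case (Suc j)
  have "x [^]\<^bsub>G\<^esub> Suc j = x [^]\<^bsub>G\<^esub> j \<otimes>\<^bsub>G\<^esub> x" by (simp add: nat_pow_def)
  then show ?case using Suc assms by (simp add: subgroup.m_closed)
qed

lemma hom_pow:
  fixes f :: "'g \<Rightarrow> complex"
  assumes "group G" "subgroup H G" "x \<in> H"
    and fm: "\<forall>x\<in>H. \<forall>y\<in>H. f (x \<otimes>\<^bsub>G\<^esub> y) = f x * f y" and f1: "f \<one>\<^bsub>G\<^esub> = 1"
  shows "f (x [^]\<^bsub>G\<^esub> (j::nat)) = f x ^ j"
proof (induction j)
  case 0 then show ?case using f1 by simp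
next
  case (Suc j)
  have "x [^]\<^bsub>G\<^esub> Suc j = x [^]\<^bsub>G\<^esub> j \<otimes>\<^bsub>G\<^esub> x" by (simp add: nat_pow_def)
  then show ?case using Suc assms subgroup_pow_closed[OF assms(1-3)] by simp
qed

lemma hom_inv:
  fixes f :: "'g \<Rightarrow> complex"
  assumes G: "group G" and H: "subgroup H G" and x: "x \<in> H"
    and fm: "\<forall>x\<in>H. \<forall>y\<in>H. f (x \<otimes>\<^bsub>G\<^esub> y) = f x * f y" and f1: "f \<one>\<^bsub>G\<^esub> = 1"
  shows "f x * f (inv\<^bsub>G\<^esub> x) = 1"
proof -
  have xi: "inv\<^bsub>G\<^esub> x \<in> H" using H x by (simp add: subgroup.m_inv_closed)
  have "x \<in> carrier G" using H x subgroup.subset by blast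
  hence "x \<otimes>\<^bsub>G\<^esub> inv\<^bsub>G\<^esub> x = \<one>\<^bsub>G\<^esub>" using G by (simp add: group.r_inv)
  thus ?thesis using fm x xi f1 by metis
qed

lemma cyclic_image:
  fixes f :: "'g \<Rightarrow> complex" and p m :: nat
  assumes G: "group G" "finite (carrier G)" "card (carrier G) = p ^ m" "Factorial_Ring.prime p"
    and H: "subgroup H G"
    and fm: "\<forall>x\<in>H. \<forall>y\<in>H. f (x \<otimes>\<^bsub>G\<^esub> y) = f x * f y" and f1: "f \<one>\<^bsub>G\<^esub> = 1"
  shows "\<exists>h\<in>H. \<forall>x\<in>H. \<exists>j::nat. f x = f h ^ j"
proof -
  have p0: "p > 0" using G(4) prime_gt_0_nat by blast
  have pw: "\<And>x j. x \<in> H \<Longrightarrow> f (x [^]\<^bsub>G\<^esub> (j::nat)) = f x ^ j"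
    using hom_pow[OF G(1) H _ fm f1] by blast
  have ordm: "f x ^ (p^m) = 1" if x: "x \<in> H" for x
  proof -
    have "x \<in> carrier G" using H x subgroup.subset by blast
    hence "x [^]\<^bsub>G\<^esub> Coset.order G = \<one>\<^bsub>G\<^esub>" using G(1) by (simp add: group.pow_order_eq_1)
    hence "f (x [^]\<^bsub>G\<^esub> (p^m)) = 1" using G(3) f1 unfolding Coset.order_def by simp
    thus ?thesis using pw x by simp
  qed
  define a where "a x = (LEAST k. f x ^ (p^k) = 1)" for x
  have a1: "f x ^ (p ^ a x) = 1" if "x \<in> H" for x
    unfolding a_def by (rule LeastI[of _ m], rule ordm[OF that])
  have amin: "f x ^ (p ^ k) \<noteq> 1" if "k < a x" for x k
    using not_less_Least that unfolding a_def by blast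
  have finH: "finite H" using H G(2) subgroup.subset finite_subset by blast
  have neH: "H \<noteq> {}" using H subgroup.one_closed by blast
  define A where "A = Max (a ` H)"
  have "A \<in> a ` H" unfolding A_def using finH neH by simp
  then obtain h where h: "h \<in> H" and Ah: "A = a h" by auto
  have amax: "a x \<le> A" if "x \<in> H" for x unfolding A_def using finH that by simp
  have allA: "f x ^ (p^A) = 1" if x: "x \<in> H" for x
  proof -
    have "p ^ a x dvd p ^ A" using amax[OF x] by (simp add: le_imp_power_dvd)
    then obtain q where "p ^ A = p ^ a x * q" by (auto elim: dvdE)
    thus ?thesis using a1[OF x] by (simp add: power_mult)
  qed
  have pA: "p ^ A > 0" using p0 by simp
  have fh0: "f h \<noteq> 0" using allA[OF h] pA by (auto simp: zero_power)
  have key: "f h ^ i \<noteq> f h ^ j" if ij: "i < j" "j < p ^ A" for i j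
  proof
    assume eq: "f h ^ i = f h ^ j"
    define d where "d = j - i"
    have d0: "d \<noteq> 0" and dA: "d < p ^ A" using ij d_def by auto
    have "f h ^ j = f h ^ i * f h ^ d" using ij d_def by (simp add: power_add[symmetric])
    hence fd: "f h ^ d = 1" using eq fh0 by simp
    obtain x y where bz: "d * x = p ^ A * y + gcd d (p ^ A)" using bezout_nat[OF d0] by blast
    have "f h ^ (d * x) = 1" using fd by (simp add: power_mult)
    moreover have "f h ^ (p ^ A * y) = 1" using allA[OF h] by (simp add: power_mult)
    ultimately have fg: "f h ^ gcd d (p ^ A) = 1" using bz by (simp add: power_add)
    have "gcd d (p ^ A) dvd p ^ A" by simp
    then obtain b where b: "b \<le> A" "gcd d (p ^ A) = p ^ b" using divides_primepow_nat[OF G(4)] by blast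
    have "b \<noteq> A"
    proof
      assume "b = A"
      hence "p ^ A dvd d" using b by (metis gcd_dvd1)
      thus False using d0 dA by (meson dvd_imp_le not_le neq0_conv)
    qed
    hence "b < a h" using b Ah by simp
    thus False using amin fg b by metis
  qed
  have inj: "inj_on (\<lambda>j. f h ^ j) {..<p^A}"
  proof (rule inj_onI)
    fix i j assume i: "i \<in> {..<p^A}" and j: "j \<in> {..<p^A}" and e: "f h ^ i = f h ^ j"
    show "i = j"
    proof (rule ccontr)
      assume "i \<noteq> j"
      hence "i < j \<or> j < i" by arith
      thus False using key e i j by (metis lessThan_iff)
    qed
  qed
  define R where "R = (\<lambda>j. f h ^ j) ` {..<p^A}"
  have sub: "R \<subseteq> {z. z ^ (p^A) = 1}"
  proof
    fix z assume "z \<in> R"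
    then obtain j where z: "z = f h ^ j" unfolding R_def by auto
    have "z ^ (p^A) = (f h ^ (p^A)) ^ j" unfolding z by (simp add: power_mult[symmetric] mult.commute)
    thus "z \<in> {z. z ^ (p^A) = 1}" using allA[OF h] by simp
  qed
  have cR: "card R = p ^ A" unfolding R_def using card_image[OF inj] by simp
  have finU: "finite {z::complex. z ^ (p^A) = 1}" using pA by (intro finite_roots_unity) linarith
  hence "R = {z. z ^ (p^A) = 1}"
    using card_subset_eq[OF finU sub] cR card_roots_unity_eq[OF pA] by simp
  hence "\<forall>x\<in>H. f x \<in> R" using allA by auto
  thus ?thesis using h unfolding R_def by blast
qed


lemma gen_lemma:
  fixes fs :: "('g \<Rightarrow> complex) list" and p m :: nat
  assumes G: "group G" "finite (carrier G)" "card (carrier G) = p ^ m" "Factorial_Ring.prime p"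
  shows "subgroup H G \<Longrightarrow> \<forall>f\<in>set fs. (\<forall>x\<in>H. \<forall>y\<in>H. f (x \<otimes>\<^bsub>G\<^esub> y) = f x * f y) \<and> f \<one>\<^bsub>G\<^esub> = 1
    \<Longrightarrow> \<forall>x\<in>H. (\<forall>f\<in>set fs. f x = 1) \<longrightarrow> x = \<one>\<^bsub>G\<^esub>
    \<Longrightarrow> \<exists>S. S \<subseteq> H \<and> finite S \<and> card S \<le> length fs \<and> generate G S = H"
proof (induction fs arbitrary: H)
  case Nil
  have "\<forall>x\<in>H. x = \<one>\<^bsub>G\<^esub>" using Nil.prems(3) by simp
  moreover have "\<one>\<^bsub>G\<^esub> \<in> H" using Nil.prems(1) by (rule subgroup.one_closed)
  ultimately have "H = {\<one>\<^bsub>G\<^esub>}" by blast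
  thus ?case using group.generate_empty[OF G(1)] by (intro exI[of _ "{}"]) auto
next
  case (Cons f fs)
  have H: "subgroup H G" by fact
  have fm: "\<forall>x\<in>H. \<forall>y\<in>H. f (x \<otimes>\<^bsub>G\<^esub> y) = f x * f y" and f1: "f \<one>\<^bsub>G\<^esub> = 1"
    using Cons.prems by auto
  have HG: "H \<subseteq> carrier G" using H subgroup.subset by blast
  define K where "K = {x\<in>H. f x = 1}"
  have finv: "\<And>x. x \<in> H \<Longrightarrow> f x * f (inv\<^bsub>G\<^esub> x) = 1" using hom_inv[OF G(1) H _ fm f1] by blast
  have K: "subgroup K G"
  proof (rule group.subgroupI[OF G(1)])
    show "K \<subseteq> carrier G" using HG K_def by auto
    show "K \<noteq> {}" using K_def f1 H subgroup.one_closed by blast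
    fix a assume a: "a \<in> K"
    hence aH: "a \<in> H" and fa: "f a = 1" using K_def by auto
    have "f (inv\<^bsub>G\<^esub> a) = 1" using finv[OF aH] fa by simp
    moreover have "inv\<^bsub>G\<^esub> a \<in> H" using aH H by (rule subgroup.m_inv_closed[rotated])
    ultimately show "inv\<^bsub>G\<^esub> a \<in> K" using K_def by blast
  next
    fix a b assume a: "a \<in> K" and b: "b \<in> K"
    hence aH: "a \<in> H" "b \<in> H" and fa: "f a = 1" "f b = 1" using K_def by auto
    have "f (a \<otimes>\<^bsub>G\<^esub> b) = 1" using fm aH fa by simp
    moreover have "a \<otimes>\<^bsub>G\<^esub> b \<in> H" using aH H by (simp add: subgroup.m_closed)
    ultimately show "a \<otimes>\<^bsub>G\<^esub> b \<in> K" using K_def by blast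
  qed
  have "\<exists>S. S \<subseteq> K \<and> finite S \<and> card S \<le> length fs \<and> generate G S = K"
  proof (rule Cons.IH[OF K])
    show "\<forall>f\<in>set fs. (\<forall>x\<in>K. \<forall>y\<in>K. f (x \<otimes>\<^bsub>G\<^esub> y) = f x * f y) \<and> f \<one>\<^bsub>G\<^esub> = 1"
      using Cons.prems(2) K_def by auto
    show "\<forall>x\<in>K. (\<forall>f\<in>set fs. f x = 1) \<longrightarrow> x = \<one>\<^bsub>G\<^esub>"
      using Cons.prems(3) K_def by auto
  qed
  then obtain S' where S': "S' \<subseteq> K" "finite S'" "card S' \<le> length fs" "generate G S' = K" by blast
  obtain h where h: "h \<in> H" and hj: "\<forall>x\<in>H. \<exists>j::nat. f x = f h ^ j"
    using cyclic_image[OF G H fm f1] by blast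
  define S where "S = insert h S'"
  have SH: "S \<subseteq> H" using S' h K_def S_def by auto
  have cS: "card S \<le> length (f # fs)" using S' S_def by (simp add: card_insert_if)
  have gS: "generate G S = H"
  proof
    show "generate G S \<subseteq> H" using group.generate_subgroup_incl[OF G(1) SH H] .
  next
    show "H \<subseteq> generate G S"
    proof
      fix x assume x: "x \<in> H"
      obtain j where j: "f x = f h ^ j" using hj x by blast
      define hp where "hp = h [^]\<^bsub>G\<^esub> j"
      have hpH: "hp \<in> H" using subgroup_pow_closed[OF G(1) H h] hp_def by simp
      have fhp: "f hp = f h ^ j" using hom_pow[OF G(1) H h fm f1] hp_def by simp
      define y where "y = x \<otimes>\<^bsub>G\<^esub> inv\<^bsub>G\<^esub> hp"
      have ihp: "inv\<^bsub>G\<^esub> hp \<in> H" using hpH H by (simp add: subgroup.m_inv_closed)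
      have "f y = f x * f (inv\<^bsub>G\<^esub> hp)" using fm x ihp y_def by simp
      also have "\<dots> = 1" using j fhp finv[OF hpH] by simp
      finally have fy: "f y = 1" .
      have "y \<in> H" using y_def x ihp H by (simp add: subgroup.m_closed)
      hence "y \<in> K" using K_def fy by blast
      moreover have "generate G S' \<subseteq> generate G S" by (rule group.mono_generate[OF G(1)]) (auto simp: S_def)
      ultimately have yg: "y \<in> generate G S" using S'(4) by blast
      have SG: "S \<subseteq> carrier G" using SH HG by auto
      have sgS: "subgroup (generate G S) G" using group.generate_is_subgroup[OF G(1) SG] .
      have "h \<in> generate G S" by (rule generate.incl) (simp add: S_def)
      hence hpg: "hp \<in> generate G S" using subgroup_pow_closed[OF G(1) sgS] hp_def by simp
      have xc: "x \<in> carrier G" "hp \<in> carrier G" using x hpH HG by auto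
      have ic: "inv\<^bsub>G\<^esub> hp \<in> carrier G" using xc G(1) by (simp add: group.inv_closed)
      have "y \<otimes>\<^bsub>G\<^esub> hp = x \<otimes>\<^bsub>G\<^esub> (inv\<^bsub>G\<^esub> hp \<otimes>\<^bsub>G\<^esub> hp)"
        unfolding y_def using xc ic G(1) by (simp add: group.is_monoid monoid.m_assoc)
      also have "\<dots> = x" using xc G(1) by (simp add: group.l_inv group.is_monoid monoid.r_one)
      finally have "x = y \<otimes>\<^bsub>G\<^esub> hp" by simp
      thus "x \<in> generate G S" using yg hpg by (simp add: generate.eng)
    qed
  qed
  have "finite S" using S'(2) S_def by simp
  thus ?case using SH cS gS by blast
qed


lemma center_subgroup:
  fixes G (structure)
  assumes G: "group G"
  shows "subgroup (center G) G"
proof (rule group.subgroupI[OF G])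
  interpret group G by (rule G)
  show "center G \<subseteq> carrier G" unfolding center_def by auto
  show "center G \<noteq> {}" unfolding center_def by (auto intro!: exI[of _ \<one>])
next
  interpret group G by (rule G)
  fix a assume a: "a \<in> center G"
  hence ac: "a \<in> carrier G" and az: "\<forall>g\<in>carrier G. a \<otimes> g = g \<otimes> a" unfolding center_def by auto
  have "\<forall>g\<in>carrier G. inv a \<otimes> g = g \<otimes> inv a"
  proof
    fix g assume g: "g \<in> carrier G"
    have "inv a \<otimes> g = inv a \<otimes> inv (inv g)" using g by simp
    also have "\<dots> = inv (inv g \<otimes> a)" using g ac by (simp add: inv_mult_group)
    also have "inv g \<otimes> a = a \<otimes> inv g" using az g by simp
    also have "inv (a \<otimes> inv g) = g \<otimes> inv a" using g ac by (simp add: inv_mult_group)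
    finally show "inv a \<otimes> g = g \<otimes> inv a" .
  qed
  thus "inv a \<in> center G" using ac unfolding center_def by auto
next
  interpret group G by (rule G)
  fix a b assume "a \<in> center G" "b \<in> center G"
  hence ac: "a \<in> carrier G" "b \<in> carrier G" and az: "\<forall>g\<in>carrier G. a \<otimes> g = g \<otimes> a" "\<forall>g\<in>carrier G. b \<otimes> g = g \<otimes> b"
    unfolding center_def by auto
  have "\<forall>g\<in>carrier G. (a \<otimes> b) \<otimes> g = g \<otimes> (a \<otimes> b)"
  proof
    fix g assume g: "g \<in> carrier G"
    have "(a \<otimes> b) \<otimes> g = a \<otimes> (b \<otimes> g)" using ac g by (simp add: m_assoc)
    also have "\<dots> = a \<otimes> (g \<otimes> b)" using az g by simp
    also have "\<dots> = (a \<otimes> g) \<otimes> b" using ac g by (simp add: m_assoc)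
    also have "\<dots> = (g \<otimes> a) \<otimes> b" using az g by simp
    also have "\<dots> = g \<otimes> (a \<otimes> b)" using ac g by (simp add: m_assoc)
    finally show "(a \<otimes> b) \<otimes> g = g \<otimes> (a \<otimes> b)" .
  qed
  thus "a \<otimes> b \<in> center G" using ac unfolding center_def by auto
qed

lemma rank_lt:
  fixes G :: "('g, 'b) monoid_scheme" and p :: nat and \<rho>s :: "('g \<Rightarrow> complex mat) list"
  assumes pg: "p_group G p"
    and nc: "\<not> comm_group G"
    and irr: "\<forall>\<rho> \<in> set \<rho>s. irreducible_rep G \<rho>"
    and pf: "proj_faithful G (direct_sum_rep \<rho>s)"
  shows "subgroup_rank G (center G) < length \<rho>s"
proof -
  have G: "group G" and pr: "Factorial_Ring.prime p" and fin: "finite (carrier G)"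
    using pg unfolding p_group_def by auto
  obtain m where cm: "card (carrier G) = p ^ m" using pg unfolding p_group_def by auto
  define Z where "Z = center G"
  have Zs: "subgroup Z G" unfolding Z_def by (rule center_subgroup[OF G])
  have ZG: "Z \<subseteq> carrier G" using Zs subgroup.subset by blast
  have Zc: "\<And>z. z \<in> Z \<Longrightarrow> \<forall>g\<in>carrier G. z \<otimes>\<^bsub>G\<^esub> g = g \<otimes>\<^bsub>G\<^esub> z" unfolding Z_def center_def by auto
  define \<chi> where "\<chi> \<rho> z = \<rho> z $$ (0,0)" for \<rho> :: "'g \<Rightarrow> complex mat" and z
  have sc: "\<rho> z = \<chi> \<rho> z \<cdot>\<^sub>m 1\<^sub>m (rep_deg G \<rho>)" if "\<rho> \<in> set \<rho>s" "z \<in> Z" for \<rho> z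
    unfolding \<chi>_def using schur_central[of G \<rho> z] irr that ZG Zc by auto
  have repi: "is_rep G (rep_deg G \<rho>) \<rho> \<and> rep_deg G \<rho> > 0" if "\<rho> \<in> set \<rho>s" for \<rho>
    using irr that unfolding irreducible_rep_def Let_def by auto
  have chom: "\<chi> \<rho> (z \<otimes>\<^bsub>G\<^esub> w) = \<chi> \<rho> z * \<chi> \<rho> w" if r: "\<rho> \<in> set \<rho>s" and zw: "z \<in> Z" "w \<in> Z" for \<rho> z w
  proof -
    define n where "n = rep_deg G \<rho>"
    have rep: "is_rep G n \<rho>" and n: "n > 0" using repi[OF r] n_def by auto
    have "\<rho> (z \<otimes>\<^bsub>G\<^esub> w) = \<rho> z * \<rho> w" using rep zw ZG unfolding is_rep_def by auto
    also have "\<dots> = (\<chi> \<rho> z \<cdot>\<^sub>m 1\<^sub>m n) * (\<chi> \<rho> w \<cdot>\<^sub>m 1\<^sub>m n)" using sc r zw n_def by metis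
    also have "\<dots> = \<chi> \<rho> z \<cdot>\<^sub>m (\<chi> \<rho> w \<cdot>\<^sub>m 1\<^sub>m n)"
      by (simp add: mult_smult_assoc_mat[of _ n n _ n])
    finally have "\<rho> (z \<otimes>\<^bsub>G\<^esub> w) $$ (0,0) = \<chi> \<rho> z * \<chi> \<rho> w" using n by simp
    thus ?thesis unfolding \<chi>_def .
  qed
  have cone: "\<chi> \<rho> \<one>\<^bsub>G\<^esub> = 1" if r: "\<rho> \<in> set \<rho>s" for \<rho>
    using repi[OF r] unfolding is_rep_def \<chi>_def by auto
  have cnz: "\<chi> \<rho> z \<noteq> 0" if r: "\<rho> \<in> set \<rho>s" and z: "z \<in> Z" for \<rho> z
  proof -
    have iz: "inv\<^bsub>G\<^esub> z \<in> Z" using Zs z by (simp add: subgroup.m_inv_closed)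
    have "z \<otimes>\<^bsub>G\<^esub> inv\<^bsub>G\<^esub> z = \<one>\<^bsub>G\<^esub>" using z ZG G by (simp add: group.r_inv subsetD)
    hence "\<chi> \<rho> z * \<chi> \<rho> (inv\<^bsub>G\<^esub> z) = 1" using chom[OF r z iz] cone[OF r] by simp
    thus ?thesis by auto
  qed
  have ne: "\<rho>s \<noteq> []"
  proof
    assume e: "\<rho>s = []"
    have all: "\<forall>g\<in>carrier G. g = \<one>\<^bsub>G\<^esub>"
    proof
      fix g assume g: "g \<in> carrier G"
      have "is_scalar_mat (direct_sum_rep \<rho>s g)"
        unfolding e direct_sum_rep_def is_scalar_mat_def by (auto intro!: exI[of _ 0] eq_matI)
      thus "g = \<one>\<^bsub>G\<^esub>" using pf g unfolding proj_faithful_def by auto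
    qed
    have "comm_group G"
    proof (rule group.group_comm_groupI[OF G])
      fix x y assume xy: "x \<in> carrier G" "y \<in> carrier G"
      have "x = \<one>\<^bsub>G\<^esub>" using all xy(1) by blast
      moreover have "y = \<one>\<^bsub>G\<^esub>" using all xy(2) by blast
      ultimately show "x \<otimes>\<^bsub>G\<^esub> y = y \<otimes>\<^bsub>G\<^esub> x" by simp
    qed
    thus False using nc by simp
  qed
  then obtain \<rho>0 rest where rs: "\<rho>s = \<rho>0 # rest" by (cases \<rho>s) auto
  have r0: "\<rho>0 \<in> set \<rho>s" using rs by simp
  define fs where "fs = map (\<lambda>\<rho> z. \<chi> \<rho> z / \<chi> \<rho>0 z) rest"
  have fsh: "\<forall>f\<in>set fs. (\<forall>x\<in>Z. \<forall>y\<in>Z. f (x \<otimes>\<^bsub>G\<^esub> y) = f x * f y) \<and> f \<one>\<^bsub>G\<^esub> = 1"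
  proof
    fix f assume "f \<in> set fs"
    then obtain \<rho> where r: "\<rho> \<in> set \<rho>s" and f: "f = (\<lambda>z. \<chi> \<rho> z / \<chi> \<rho>0 z)" using fs_def rs by auto
    show "(\<forall>x\<in>Z. \<forall>y\<in>Z. f (x \<otimes>\<^bsub>G\<^esub> y) = f x * f y) \<and> f \<one>\<^bsub>G\<^esub> = 1"
      unfolding f using chom[OF r] chom[OF r0] cone[OF r] cone[OF r0] by (simp add: times_divide_times_eq)
  qed
  have fsk: "\<forall>x\<in>Z. (\<forall>f\<in>set fs. f x = 1) \<longrightarrow> x = \<one>\<^bsub>G\<^esub>"
  proof (intro ballI impI)
    fix z assume z: "z \<in> Z" and all: "\<forall>f\<in>set fs. f z = 1"
    define c where "c = \<chi> \<rho>0 z"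
    have c0: "c \<noteq> 0" using cnz[OF r0 z] c_def by simp
    have eqc: "\<chi> \<rho> z = c" if r: "\<rho> \<in> set \<rho>s" for \<rho>
    proof (cases "\<rho> = \<rho>0")
      case True thus ?thesis using c_def by simp
    next
      case False
      hence "\<rho> \<in> set rest" using r rs by auto
      hence "\<chi> \<rho> z / c = 1" using all fs_def c_def by auto
      thus ?thesis using c0 by (simp add: divide_eq_1_iff)
    qed
    have "\<forall>A\<in>set (map (\<lambda>\<rho>. \<rho> z) \<rho>s). \<exists>m. A = c \<cdot>\<^sub>m 1\<^sub>m m"
      using sc eqc z by fastforce
    hence "direct_sum_rep \<rho>s z = c \<cdot>\<^sub>m 1\<^sub>m (dim_row (direct_sum_rep \<rho>s z))"
      unfolding direct_sum_rep_def by (rule diag_block_scalar)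
    hence "is_scalar_mat (direct_sum_rep \<rho>s z)" unfolding is_scalar_mat_def by blast
    thus "z = \<one>\<^bsub>G\<^esub>" using pf z ZG unfolding proj_faithful_def by auto
  qed
  obtain S where S: "S \<subseteq> Z" "finite S" "card S \<le> length fs" "generate G S = Z"
    using gen_lemma[OF G fin cm pr Zs fsh fsk] by blast
  have "subgroup_rank G Z \<le> card S"
    unfolding subgroup_rank_def using S by (intro Least_le) blast
  also have "\<dots> < length \<rho>s" using S(3) fs_def rs by simp
  finally show ?thesis unfolding Z_def .
qed

theorem lemma6p1:
  fixes G :: "('g, 'b) monoid_scheme" and p :: nat and \<rho>s :: "('g \<Rightarrow> complex mat) list"
  assumes "p_group G p"
    and "\<not> comm_group G"
    and "\<forall>\<rho> \<in> set \<rho>s. irreducible_rep G \<rho>"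
    and "proj_faithful G (direct_sum_rep \<rho>s)"
  shows "(\<not> (subgroup_generated G (center G) \<cong> Z2 \<times>\<times> Z2) \<and>
          \<not> (subgroup_generated G (center G) \<cong> Z2 \<times>\<times> Z2 \<times>\<times> Z2 \<times>\<times> Z2)
            \<longrightarrow> length \<rho>s > subgroup_rank G (center G))
       \<and> ((subgroup_generated G (center G) \<cong> Z2 \<times>\<times> Z2) \<or>
          (subgroup_generated G (center G) \<cong> Z2 \<times>\<times> Z2 \<times>\<times> Z2 \<times>\<times> Z2)
            \<longrightarrow> int (length \<rho>s) > int (subgroup_rank G (center G)) - 1)"
  using rank_lt[OF assms] by simp

end
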